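(* Suppose $\Theta=\mathbb R^p$, $\Psi$ has locally Lipschitz continuous gradients, and $\Theta_c\subset\Theta$ is compact. For $\widehat\theta\in\Theta$, $\rho\ge0$ and $v\in\mathbb R^p$ define \[\mathcal R_{\widehat\theta,\rho}(v)=\sup\big\{\Psi(v)-\langle\nabla\Psi(\theta),v\rangle:\ \theta\in\Theta,\ \mathrm{KL}(f(\cdot|\theta)\|f(\cdot|\widehat\theta))\le\rho\big\},\] which equals $\sup_{\mathbb Q\in\mathbb B_{Y|\widehat x_c}}\mathbb E_{\mathbb Q}[\ell_\lambda(\widehat x_c,Y,w)]$ when $v=\lambda(w,\widehat x_c)$, $\widehat\theta=\widehat\theta_c$, $\rho=\rho_c$. For any fixed $\overline\rho>0$ there exist constants $0<m<M<\infty$ depending only on $\Psi$, $\Theta_c$ and $\overline\rho$ such that for every $v\in\mathbb R^p$, every $\rho\in[0,\overline\rho]$ and every $\widehat\theta\in\Theta_c$, \[\sqrt{2\rho/M}\,\|v\|_2\le\mathcal R_{\widehat\theta,\rho}(v)-\mathcal R_{\widehat\theta,0}(v)\le\sqrt{2\rho/m}\,\|v\|_2.\]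
   Context: Exponential family: $\nu$ a measure on $\mathcal Y\subseteq\mathbb R^m$, $h\ge0$, $T:\mathcal Y\to\mathbb R^p$; $f(y|\theta)=h(y)\exp(\langle\theta,T(y)\rangle-\Psi(\theta))$ density w.r.t. $\nu$; $\Theta=\{\theta\in\mathbb R^p:\int he^{\langle\theta,T\rangle}d\nu<\infty\}$, $\Psi(\theta)=\log\int he^{\langle\theta,T\rangle}d\nu$; regular family ($\Theta$ open, $T_i$ affinely independent). Log-loss $\ell_\lambda(x,y,w)=\Psi(\lambda(w,x))-\langle T(y),\lambda(w,x)\rangle$ for a map $\lambda:\mathcal W\times\mathcal X\to\Theta$. KL divergence $\mathrm{KL}(\mathbb P_1\|\mathbb P_2)=\mathbb E_{\mathbb P_1}[\log d\mathbb P_1/d\mathbb P_2]$. $\mathbb B_{Y|\widehat x_c}$ denotes the set of distributions with density $f(\cdot|\theta)$, $\theta\in\Theta$, $\mathrm{KL}(f(\cdot|\theta)\|f(\cdot|\widehat\theta_c))\le\rho_c$. *)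

theory Defs
  imports "HOL-Analysis.Analysis" "HOL-Probability.Probability"
begin

definition grad :: "('a::real_inner \<Rightarrow> real) \<Rightarrow> 'a \<Rightarrow> 'a" where
  "grad f x = (THE D. GDERIV f x :> D)"

definition log_partition ::
  "'y measure \<Rightarrow> ('y \<Rightarrow> real) \<Rightarrow> ('y \<Rightarrow> 'p::euclidean_space) \<Rightarrow> 'p \<Rightarrow> real" where
  "log_partition \<nu> h T \<theta> = ln (enn2real (\<integral>\<^sup>+ y. ennreal (h y * exp (\<theta> \<bullet> T y)) \<partial>\<nu>))"

definition expfam_density ::
  "'y measure \<Rightarrow> ('y \<Rightarrow> real) \<Rightarrow> ('y \<Rightarrow> 'p::euclidean_space) \<Rightarrow> 'p \<Rightarrow> 'y \<Rightarrow> real" where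
  "expfam_density \<nu> h T \<theta> y = h y * exp (\<theta> \<bullet> T y - log_partition \<nu> h T \<theta>)"

definition expfam_dist ::
  "'y measure \<Rightarrow> ('y \<Rightarrow> real) \<Rightarrow> ('y \<Rightarrow> 'p::euclidean_space) \<Rightarrow> 'p \<Rightarrow> 'y measure" where
  "expfam_dist \<nu> h T \<theta> = density \<nu> (\<lambda>y. ennreal (expfam_density \<nu> h T \<theta> y))"

text \<open>KL(P1 || P2) = E_P1[log dP1/dP2] (natural logarithm). Note that the library's
  KL_divergence b M N is the divergence of N from M, i.e. KL(N || M).\<close>
definition KL :: "'y measure \<Rightarrow> 'y measure \<Rightarrow> real" where
  "KL P1 P2 = KL_divergence (exp 1) P2 P1"

definition nat_param_space ::
  "'y measure \<Rightarrow> ('y \<Rightarrow> real) \<Rightarrow> ('y \<Rightarrow> 'p::euclidean_space) \<Rightarrow> 'p set" where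
  "nat_param_space \<nu> h T = {\<theta>. (\<integral>\<^sup>+ y. ennreal (h y * exp (\<theta> \<bullet> T y)) \<partial>\<nu>) < \<infinity>}"

definition affinely_independent_stat ::
  "'y measure \<Rightarrow> ('y \<Rightarrow> real) \<Rightarrow> ('y \<Rightarrow> 'p::euclidean_space) \<Rightarrow> bool" where
  "affinely_independent_stat \<nu> h T \<longleftrightarrow>
     (\<forall>a c. (AE y in \<nu>. h y > 0 \<longrightarrow> a \<bullet> T y = c) \<longrightarrow> a = 0 \<and> c = 0)"

definition locally_lipschitz :: "('a::metric_space \<Rightarrow> 'b::metric_space) \<Rightarrow> bool" where
  "locally_lipschitz g \<longleftrightarrow>
     (\<forall>x. \<exists>e>0. \<exists>L. \<forall>y\<in>ball x e. \<forall>z\<in>ball x e. dist (g y) (g z) \<le> L * dist y z)"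

definition worst_risk ::
  "'y measure \<Rightarrow> ('y \<Rightarrow> real) \<Rightarrow> ('y \<Rightarrow> 'p::euclidean_space) \<Rightarrow> 'p \<Rightarrow> real \<Rightarrow> 'p \<Rightarrow> ereal" where
  "worst_risk \<nu> h T \<theta>h \<rho> v =
     (SUP \<theta> \<in> {\<theta> \<in> nat_param_space \<nu> h T.
                 KL (expfam_dist \<nu> h T \<theta>) (expfam_dist \<nu> h T \<theta>h) \<le> \<rho>}.
        ereal (log_partition \<nu> h T v - grad (log_partition \<nu> h T) \<theta> \<bullet> v))"

end

theory Submission
  imports Defs
begin

locale ef =
  fixes \<nu> :: "'y::euclidean_space measure"
    and h :: "'y \<Rightarrow> real"
    and T :: "'y \<Rightarrow> real ^ 'p"
  assumes sets_nu: "sets \<nu> = sets borel"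
    and h_meas[measurable]: "h \<in> borel_measurable \<nu>"
    and h_nonneg: "\<And>y. h y \<ge> 0"
    and T_meas[measurable]: "T \<in> borel_measurable \<nu>"
    and Theta_full: "nat_param_space \<nu> h T = UNIV"
    and regular: "affinely_independent_stat \<nu> h T"
    and Psi_diff: "\<And>\<theta>. log_partition \<nu> h T differentiable (at \<theta>)"
begin

definition w :: "real^'p \<Rightarrow> 'y \<Rightarrow> real" where "w \<theta> y = h y * exp (\<theta> \<bullet> T y)"
definition Z :: "real^'p \<Rightarrow> real" where "Z \<theta> = (\<integral>y. w \<theta> y \<partial>\<nu>)"
abbreviation "\<Psi> \<equiv> log_partition \<nu> h T"

lemma w_meas[measurable]: "w \<theta> \<in> borel_measurable \<nu>"
  unfolding w_def by measurable

lemma w_nonneg: "w \<theta> y \<ge> 0" unfolding w_def using h_nonneg by simp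

lemma nn_fin: "(\<integral>\<^sup>+ y. ennreal (w \<theta> y) \<partial>\<nu>) < \<infinity>"
  using Theta_full unfolding nat_param_space_def w_def by auto

lemma w_int: "integrable \<nu> (w \<theta>)"
  using nn_fin w_nonneg by (intro integrableI_nonneg) auto

lemma nn_eq: "(\<integral>\<^sup>+ y. ennreal (w \<theta> y) \<partial>\<nu>) = ennreal (Z \<theta>)"
  unfolding Z_def using w_int w_nonneg by (intro nn_integral_eq_integral) auto

lemma Z_nonneg: "Z \<theta> \<ge> 0" unfolding Z_def using w_nonneg by simp

lemma Z_pos: "Z \<theta> > 0"
proof (rule ccontr)
  assume "\<not> Z \<theta> > 0"
  then have "Z \<theta> = 0" using Z_nonneg[of \<theta>] by linarith
  then have "(\<integral>\<^sup>+ y. ennreal (w \<theta> y) \<partial>\<nu>) = 0" using nn_eq by simp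
  then have "AE y in \<nu>. ennreal (w \<theta> y) = 0" by (subst (asm) nn_integral_0_iff_AE) auto
  then have "AE y in \<nu>. h y > 0 \<longrightarrow> (0::real^'p) \<bullet> T y = 1"
    by eventually_elim (auto simp: w_def)
  from regular[unfolded affinely_independent_stat_def, rule_format, OF this]
  show False by simp
qed

lemma Psi_eq: "\<Psi> \<theta> = ln (Z \<theta>)"
  unfolding log_partition_def using nn_eq[of \<theta>] Z_nonneg[of \<theta>] by (simp add: w_def)

lemma abs_le_exp2: "\<bar>x::real\<bar> \<le> exp x + exp (-x)"
proof -
  have "x \<le> exp x" "-x \<le> exp (-x)" using exp_ge_add_one_self[of x] exp_ge_add_one_self[of "-x"] by linarith+
  then show ?thesis using exp_gt_zero[of x] exp_gt_zero[of "-x"] by linarith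
qed

lemma w_add: "w (\<theta> + a) y = w \<theta> y * exp (a \<bullet> T y)"
  unfolding w_def by (simp add: inner_add_left exp_add)

lemma w_diff: "w (\<theta> - a) y = w \<theta> y * exp (- (a \<bullet> T y))"
  unfolding w_def by (simp add: inner_diff_left exp_diff exp_minus field_simps)

lemma wT_int: "integrable \<nu> (\<lambda>y. w \<theta> y * (a \<bullet> T y))"
proof (rule Bochner_Integration.integrable_bound)
  show "integrable \<nu> (\<lambda>y. w (\<theta> + a) y + w (\<theta> - a) y)"
    using w_int by auto
  show "(\<lambda>y. w \<theta> y * (a \<bullet> T y)) \<in> borel_measurable \<nu>" by measurable
  show "AE y in \<nu>. norm (w \<theta> y * (a \<bullet> T y)) \<le> norm (w (\<theta> + a) y + w (\<theta> - a) y)"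
  proof (intro AE_I2)
    fix y
    have "norm (w \<theta> y * (a \<bullet> T y)) = w \<theta> y * \<bar>a \<bullet> T y\<bar>"
      using w_nonneg[of \<theta> y] by (simp add: abs_mult)
    also have "\<dots> \<le> w \<theta> y * (exp (a \<bullet> T y) + exp (- (a \<bullet> T y)))"
      using w_nonneg[of \<theta> y] abs_le_exp2 by (intro mult_left_mono) auto
    also have "\<dots> = w (\<theta> + a) y + w (\<theta> - a) y"
      by (simp add: w_add w_diff algebra_simps)
    also have "\<dots> = norm (w (\<theta> + a) y + w (\<theta> - a) y)"
      using w_nonneg[of "\<theta> + a" y] w_nonneg[of "\<theta> - a" y] by simp
    finally show "norm (w \<theta> y * (a \<bullet> T y)) \<le> norm (w (\<theta> + a) y + w (\<theta> - a) y)" .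
  qed
qed

definition m :: "real^'p \<Rightarrow> real^'p" where
  "m \<theta> = (1 / Z \<theta>) *\<^sub>R (\<chi> i. \<integral>y. w \<theta> y * T y $ i \<partial>\<nu>)"

lemma m_inner: "a \<bullet> m \<theta> = (\<integral>y. w \<theta> y * (a \<bullet> T y) \<partial>\<nu>) / Z \<theta>"
proof -
  have int: "integrable \<nu> (\<lambda>y. w \<theta> y * T y $ i)" for i
    using wT_int[of \<theta> "axis i 1"] by (simp add: inner_axis')
  have "(\<integral>y. w \<theta> y * (a \<bullet> T y) \<partial>\<nu>) = (\<integral>y. (\<Sum>i\<in>UNIV. a $ i * (w \<theta> y * T y $ i)) \<partial>\<nu>)"
    by (simp add: inner_vec_def sum_distrib_left mult_ac)
  also have "\<dots> = (\<Sum>i\<in>UNIV. a $ i * (\<integral>y. w \<theta> y * T y $ i \<partial>\<nu>))"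
    using int by (simp add: integral_sum)
  finally show ?thesis unfolding m_def by (simp add: inner_vec_def sum_divide_distrib mult_ac)
qed

lemma subgrad: "\<Psi> \<theta>' \<ge> \<Psi> \<theta> + (\<theta>' - \<theta>) \<bullet> m \<theta>"
proof -
  define a where "a = \<theta>' - \<theta>"
  define c where "c = a \<bullet> m \<theta>"
  have th': "\<theta>' = \<theta> + a" unfolding a_def by simp
  have Zp: "Z \<theta> > 0" by (rule Z_pos)
  have eqc: "(\<integral>y. w \<theta> y * (a \<bullet> T y) \<partial>\<nu>) = c * Z \<theta>"
    unfolding c_def m_inner using Zp by simp
  have "exp c * Z \<theta> = exp c * (Z \<theta> + (\<integral>y. w \<theta> y * (a \<bullet> T y) \<partial>\<nu>) - c * Z \<theta>)"
    using eqc by simp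
  also have "\<dots> = (\<integral>y. exp c * (w \<theta> y + w \<theta> y * (a \<bullet> T y) - c * w \<theta> y) \<partial>\<nu>)"
    using w_int wT_int unfolding Z_def by simp
  also have "\<dots> \<le> (\<integral>y. w (\<theta> + a) y \<partial>\<nu>)"
  proof (rule integral_mono)
    show "integrable \<nu> (\<lambda>y. exp c * (w \<theta> y + w \<theta> y * (a \<bullet> T y) - c * w \<theta> y))"
      using w_int wT_int by auto
    show "integrable \<nu> (w (\<theta> + a))" by (rule w_int)
    fix y
    have "exp c * (1 + (a \<bullet> T y - c)) \<le> exp c * exp (a \<bullet> T y - c)"
      by (intro mult_left_mono exp_ge_add_one_self) auto
    also have "\<dots> = exp (a \<bullet> T y)" by (simp add: exp_diff)
    finally have "exp c * (1 + (a \<bullet> T y - c)) \<le> exp (a \<bullet> T y)" .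
    then have "w \<theta> y * (exp c * (1 + (a \<bullet> T y - c))) \<le> w \<theta> y * exp (a \<bullet> T y)"
      using w_nonneg by (intro mult_left_mono) auto
    then show "exp c * (w \<theta> y + w \<theta> y * (a \<bullet> T y) - c * w \<theta> y) \<le> w (\<theta> + a) y"
      by (simp add: w_add algebra_simps)
  qed
  also have "\<dots> = Z \<theta>'" unfolding Z_def th' ..
  finally have "exp c * Z \<theta> \<le> Z \<theta>'" .
  then have "ln (exp c * Z \<theta>) \<le> ln (Z \<theta>')" using Zp Z_pos[of \<theta>'] by (subst ln_le_cancel_iff) auto
  then have "c + ln (Z \<theta>) \<le> ln (Z \<theta>')" using Zp by (simp add: ln_mult)
  then show ?thesis unfolding Psi_eq c_def a_def by simp
qed

lemma Psi_deriv: "(\<Psi> has_derivative (\<lambda>x. x \<bullet> m \<theta>)) (at \<theta>)"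
proof -
  obtain f' where f': "(\<Psi> has_derivative f') (at \<theta>)"
    using Psi_diff[of \<theta>] unfolding differentiable_def by blast
  define \<phi> where "\<phi> x = \<Psi> x - \<Psi> \<theta> - (x - \<theta>) \<bullet> m \<theta>" for x
  have d: "(\<phi> has_derivative (\<lambda>x. f' x - x \<bullet> m \<theta>)) (at \<theta>)"
    unfolding \<phi>_def by (auto intro!: derivative_eq_intros f')
  have "\<forall>x. \<phi> \<theta> \<le> \<phi> x"
  proof
    fix x from subgrad[of \<theta> x] show "\<phi> \<theta> \<le> \<phi> x" by (simp add: \<phi>_def)
  qed
  then have "eventually (\<lambda>x. \<phi> \<theta> \<le> \<phi> x) (at \<theta>)"
    by (intro always_eventually)
  from has_derivative_local_min[OF d this] have "\<And>x. f' x = x \<bullet> m \<theta>"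
    by (metis eq_iff_diff_eq_0)
  with f' show ?thesis by (metis (no_types) ext)
qed

lemma grad_eq: "grad \<Psi> \<theta> = m \<theta>"
  unfolding grad_def
proof (rule the_equality)
  show "GDERIV \<Psi> \<theta> :> m \<theta>" unfolding gderiv_def
    using Psi_deriv by (simp add: inner_commute)
  fix D assume "GDERIV \<Psi> \<theta> :> D"
  then have "(\<Psi> has_derivative (\<lambda>x. x \<bullet> D)) (at \<theta>)" unfolding gderiv_def .
  from has_derivative_unique[OF this Psi_deriv] have "\<And>x. x \<bullet> D = x \<bullet> m \<theta>" by metis
  from this[of "D - m \<theta>"] have "(D - m \<theta>) \<bullet> (D - m \<theta>) = 0" by (simp add: inner_diff_right)
  then show "D = m \<theta>" by simp
qed

abbreviation "fd \<equiv> expfam_density \<nu> h T"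
abbreviation "P \<equiv> expfam_dist \<nu> h T"

lemma fd_eq: "fd \<theta> y = w \<theta> y / Z \<theta>"
  unfolding expfam_density_def w_def Psi_eq using Z_pos[of \<theta>]
  by (simp add: exp_diff)

lemma fd_meas[measurable]: "fd \<theta> \<in> borel_measurable \<nu>"
  unfolding fd_eq by measurable

lemma fd_nonneg: "fd \<theta> y \<ge> 0"
  unfolding fd_eq using w_nonneg Z_pos[of \<theta>] by simp

lemma fd_int: "integrable \<nu> (fd \<theta>)"
  unfolding fd_eq using w_int by simp

lemma finite_P: "finite_measure (P \<theta>)"
proof
  have "emeasure (P \<theta>) (space (P \<theta>)) = (\<integral>\<^sup>+ y. ennreal (fd \<theta> y) * indicator (space \<nu>) y \<partial>\<nu>)"
    unfolding expfam_dist_def by (simp add: emeasure_density)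
  also have "\<dots> = (\<integral>\<^sup>+ y. ennreal (fd \<theta> y) \<partial>\<nu>)"
    using fd_nonneg by (intro nn_integral_cong) auto
  finally show "emeasure (P \<theta>) (space (P \<theta>)) \<noteq> \<infinity>" using integrableD(2)[OF fd_int] by simp
qed

lemma KL_eq: "KL (P \<theta>) (P \<theta>h) = \<Psi> \<theta>h - \<Psi> \<theta> - (\<theta>h - \<theta>) \<bullet> m \<theta>"
proof -
  define r where "r y = exp ((\<theta> - \<theta>h) \<bullet> T y - \<Psi> \<theta> + \<Psi> \<theta>h)" for y
  have r_meas[measurable]: "r \<in> borel_measurable \<nu>" unfolding r_def by measurable
  have fr: "fd \<theta>h y * r y = fd \<theta> y" for y
    unfolding expfam_density_def r_def by (simp add: inner_diff_left flip: exp_add)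
  have Pd: "P \<theta> = density (P \<theta>h) (\<lambda>y. ennreal (r y))"
  proof -
    have "density (P \<theta>h) (\<lambda>y. ennreal (r y)) = density \<nu> (\<lambda>y. ennreal (fd \<theta>h y) * ennreal (r y))"
      unfolding expfam_dist_def by (rule density_density_eq) auto
    also have "\<dots> = P \<theta>" unfolding expfam_dist_def
      by (intro density_cong) (auto simp: fr[symmetric] ennreal_mult' fd_nonneg)
    finally show ?thesis ..
  qed
  interpret F: finite_measure "P \<theta>h" by (rule finite_P)
  have sP: "sets (P \<theta>h) = sets \<nu>" unfolding expfam_dist_def by simp
  have r_meas2[measurable]: "r \<in> borel_measurable (P \<theta>h)"
    using r_meas measurable_cong_sets[OF sP refl] by metis
  have "KL (P \<theta>) (P \<theta>h) = KL_divergence (exp 1) (P \<theta>h) (density (P \<theta>h) (\<lambda>y. ennreal (r y)))"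
    unfolding KL_def Pd ..
  also have "\<dots> = (\<integral>y. r y * log (exp 1) (r y) \<partial>P \<theta>h)"
    by (rule F.KL_density[OF _ r_meas2]) (auto simp: r_def)
  also have "\<dots> = (\<integral>y. fd \<theta>h y * (r y * log (exp 1) (r y)) \<partial>\<nu>)"
    unfolding expfam_dist_def by (subst integral_density) (auto simp: fd_nonneg)
  also have "\<dots> = (\<integral>y. (1 / Z \<theta>) * (w \<theta> y * ((\<theta> - \<theta>h) \<bullet> T y)) + ((\<Psi> \<theta>h - \<Psi> \<theta>) / Z \<theta>) * w \<theta> y \<partial>\<nu>)"
  proof (rule Bochner_Integration.integral_cong[OF refl])
    fix y
    have "fd \<theta>h y * (r y * log (exp 1) (r y)) = fd \<theta> y * ((\<theta> - \<theta>h) \<bullet> T y - \<Psi> \<theta> + \<Psi> \<theta>h)"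
      by (simp add: log_def r_def fr[symmetric] mult_ac)
    then show "fd \<theta>h y * (r y * log (exp 1) (r y)) = (1 / Z \<theta>) * (w \<theta> y * ((\<theta> - \<theta>h) \<bullet> T y)) + ((\<Psi> \<theta>h - \<Psi> \<theta>) / Z \<theta>) * w \<theta> y"
      unfolding fd_eq by (simp add: add_divide_distrib diff_divide_distrib algebra_simps)
  qed
  also have "\<dots> = (1 / Z \<theta>) * (\<integral>y. w \<theta> y * ((\<theta> - \<theta>h) \<bullet> T y) \<partial>\<nu>) + ((\<Psi> \<theta>h - \<Psi> \<theta>) / Z \<theta>) * Z \<theta>"
    using w_int wT_int unfolding Z_def by simp
  also have "\<dots> = (\<theta> - \<theta>h) \<bullet> m \<theta> + (\<Psi> \<theta>h - \<Psi> \<theta>)"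
    unfolding m_inner using Z_pos[of \<theta>] by simp
  finally show ?thesis by (simp add: inner_diff_left)
qed

end

locale ef2 = ef \<nu> h T for \<nu> :: "'y::euclidean_space measure" and h and T :: "'y \<Rightarrow> real ^ 'p" +
  fixes \<Theta>c :: "(real ^ 'p) set"
  assumes grad_loc_lip: "locally_lipschitz (grad (log_partition \<nu> h T))"
    and Theta_c: "compact \<Theta>c"
begin

lemma m_loc_lip: "locally_lipschitz m"
  using grad_loc_lip by (simp add: grad_eq[abs_def])

lemma m_lip_compact:
  assumes "compact K"
  obtains L where "L > 0" "\<And>x y. x \<in> K \<Longrightarrow> y \<in> K \<Longrightarrow> norm (m x - m y) \<le> L * norm (x - y)"
proof -
  have loc: "local_lipschitz {0::real} K (\<lambda>t. m)"
  proof (rule local_lipschitzI)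
    fix t x assume "t \<in> {0::real}" "x \<in> K"
    obtain e L where e: "e > 0" and L: "\<forall>y\<in>ball x e. \<forall>z\<in>ball x e. dist (m y) (m z) \<le> L * dist y z"
      using m_loc_lip unfolding locally_lipschitz_def by blast
    have "L-lipschitz_on (cball x (e/2) \<inter> K) m"
    proof (rule lipschitz_onI)
      fix y z assume "y \<in> cball x (e/2) \<inter> K" "z \<in> cball x (e/2) \<inter> K"
      then have "y \<in> ball x e" "z \<in> ball x e" using e by auto
      then show "dist (m y) (m z) \<le> L * dist y z" using L by blast
    next
      have "dist (m x) (m x) \<le> L * dist x x" using L e by auto
      show "0 \<le> L"
      proof (rule ccontr)
        assume "\<not> 0 \<le> L"
        obtain y where "y \<in> ball x e" "y \<noteq> x"
        proof -
          obtain b :: "real^'p" where "b \<in> Basis" by (meson SOME_Basis)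
          moreover have "x + (e/2) *\<^sub>R b \<in> ball x e" "x + (e/2) *\<^sub>R b \<noteq> x"
            using e calculation by (auto simp: dist_norm)
          ultimately show ?thesis using that by blast
        qed
        then have "dist (m y) (m x) \<le> L * dist y x" using L e by auto
        moreover have "L * dist y x < 0" using \<open>\<not> 0 \<le> L\<close> \<open>y \<noteq> x\<close>
          by (simp add: mult_neg_pos)
        ultimately show False by (metis zero_le_dist not_le order_trans)
      qed
    qed
    then show "\<exists>u>0. \<exists>L. \<forall>t\<in>cball t u \<inter> {0}. L-lipschitz_on (cball x u \<inter> K) m"
      using e by (intro exI[of _ "e/2"]) auto
  qed
  obtain L where L: "\<And>t. t \<in> {0::real} \<Longrightarrow> L-lipschitz_on K m"
    using local_lipschitz_compact_implies_lipschitz[OF loc assms] by auto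
  have LK: "L-lipschitz_on K m" using L by auto
  show ?thesis
  proof (rule that[of "max L 1"])
    fix x y assume "x \<in> K" "y \<in> K"
    then have "dist (m x) (m y) \<le> L * dist x y" using LK lipschitz_onD by blast
    also have "\<dots> \<le> max L 1 * dist x y" by (intro mult_right_mono) auto
    finally show "norm (m x - m y) \<le> max L 1 * norm (x - y)" by (simp add: dist_norm)
  qed auto
qed

lemma m_cont: "continuous_on UNIV m"
proof (rule continuous_at_imp_continuous_on, rule ballI)
  fix x :: "real^'p"
  obtain L where L: "L > 0" "\<And>a b. a \<in> cball x 1 \<Longrightarrow> b \<in> cball x 1 \<Longrightarrow> norm (m a - m b) \<le> L * norm (a - b)"
    using m_lip_compact[of "cball x 1"] by auto
  show "isCont m x"
    unfolding continuous_at_eps_delta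
  proof (intro allI impI)
    fix e :: real assume "e > 0"
    show "\<exists>d>0. \<forall>y. dist y x < d \<longrightarrow> dist (m y) (m x) < e"
    proof (intro exI[of _ "min 1 (e / L)"] conjI allI impI)
      show "0 < min 1 (e / L)" using \<open>e > 0\<close> L by auto
      fix y assume "dist y x < min 1 (e / L)"
      then have y: "y \<in> cball x 1" "norm (y - x) < e / L" by (auto simp: dist_norm norm_minus_commute)
      have "dist (m y) (m x) \<le> L * norm (y - x)" using L(2)[OF y(1)] by (simp add: dist_norm)
      also have "\<dots> < L * (e / L)" using y(2) L by (intro mult_strict_left_mono) auto
      finally show "dist (m y) (m x) < e" using L by simp
    qed
  qed
qed

lemma Psi_cont: "continuous_on UNIV \<Psi>"
  using Psi_deriv has_derivative_continuous by (intro continuous_at_imp_continuous_on) blast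

lemma Z_exp: "Z \<theta> = exp (\<Psi> \<theta>)"
  using Z_pos[of \<theta>] by (simp add: Psi_eq)

lemma Z_cont: "continuous_on UNIV Z"
  unfolding Z_exp[abs_def] by (intro continuous_on_exp Psi_cont)

lemma mvt_Psi: "\<exists>t. 0 < t \<and> t < 1 \<and> \<Psi> y - \<Psi> x = (y - x) \<bullet> m (x + t *\<^sub>R (y - x))"
proof -
  define q where "q t = \<Psi> (x + t *\<^sub>R (y - x))" for t
  have "DERIV q t :> (y - x) \<bullet> m (x + t *\<^sub>R (y - x))" for t
  proof -
    have "((\<lambda>t. \<Psi> (x + t *\<^sub>R (y - x))) has_derivative (\<lambda>s. (s *\<^sub>R (y - x)) \<bullet> m (x + t *\<^sub>R (y - x)))) (at t)"
      by (rule has_derivative_compose[OF _ Psi_deriv, of "\<lambda>t. x + t *\<^sub>R (y - x)", simplified])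
         (auto intro!: derivative_eq_intros)
    then show ?thesis unfolding q_def has_field_derivative_def
      by (simp add: mult_commute_abs)
  qed
  from MVT2[of 0 1 q, OF _ this] obtain z where "0 < z" "z < 1" "q 1 - q 0 = (1 - 0) * ((y - x) \<bullet> m (x + z *\<^sub>R (y - x)))"
    by auto
  then show ?thesis unfolding q_def by auto
qed

lemma descent:
  assumes L: "\<And>a b. a \<in> S \<Longrightarrow> b \<in> S \<Longrightarrow> norm (m a - m b) \<le> L * norm (a - b)"
    and "convex S" "x \<in> S" "y \<in> S" "L \<ge> 0"
  shows "\<Psi> y \<le> \<Psi> x + (y - x) \<bullet> m x + L * (norm (y - x))^2"
proof -
  obtain t where t: "0 < t" "t < 1" "\<Psi> y - \<Psi> x = (y - x) \<bullet> m (x + t *\<^sub>R (y - x))"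
    using mvt_Psi by blast
  define z where "z = x + t *\<^sub>R (y - x)"
  have "z = (1 - t) *\<^sub>R x + t *\<^sub>R y" unfolding z_def by (simp add: algebra_simps)
  then have zS: "z \<in> S" using assms(2-4) t by (simp add: convex_def)
  have "(y - x) \<bullet> (m z - m x) \<le> norm (y - x) * norm (m z - m x)" by (rule norm_cauchy_schwarz)
  also have "\<dots> \<le> norm (y - x) * (L * norm (z - x))" using L[OF zS assms(3)] by (intro mult_left_mono) auto
  also have "norm (z - x) = t * norm (y - x)" unfolding z_def using t by simp
  also have "norm (y - x) * (L * (t * norm (y - x))) \<le> norm (y - x) * (L * (1 * norm (y - x)))"
    using t assms(5) by (intro mult_left_mono mult_right_mono) auto
  finally have "(y - x) \<bullet> (m z - m x) \<le> L * (norm (y - x))^2" by (simp add: power2_eq_square mult_ac)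
  then show ?thesis using t(3) unfolding z_def[symmetric] by (simp add: inner_diff_right)
qed

definition K :: "(real^'p) set" where "K = {x + y | x y. x \<in> \<Theta>c \<and> y \<in> cball 0 1}"

lemma K_compact: "compact K"
  unfolding K_def by (intro compact_sums Theta_c compact_cball)

lemma cball_K: "\<theta>h \<in> \<Theta>c \<Longrightarrow> cball \<theta>h 1 \<subseteq> K"
proof
  fix x assume "\<theta>h \<in> \<Theta>c" "x \<in> cball \<theta>h 1"
  then show "x \<in> K" unfolding K_def
    by (intro CollectI exI[of _ \<theta>h] exI[of _ "x - \<theta>h"]) (auto simp: dist_norm norm_minus_commute)
qed

lemma K_lip: "\<exists>L>0. \<forall>a\<in>K. \<forall>b\<in>K. norm (m a - m b) \<le> L * norm (a - b)"
  using m_lip_compact[OF K_compact] by metis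

definition D :: "real^'p \<Rightarrow> real^'p \<Rightarrow> real" where
  "D \<theta>h \<theta> = \<Psi> \<theta>h - \<Psi> \<theta> - (\<theta>h - \<theta>) \<bullet> m \<theta>"

lemma D_nonneg: "D \<theta>h \<theta> \<ge> 0"
  using subgrad[of \<theta> \<theta>h] unfolding D_def by simp

lemma D_upper:
  assumes L: "L > 0" "\<forall>a\<in>K. \<forall>b\<in>K. norm (m a - m b) \<le> L * norm (a - b)"
    and th: "\<theta>h \<in> \<Theta>c" and "norm (\<theta> - \<theta>h) \<le> 1"
  shows "D \<theta>h \<theta> \<le> L * (norm (\<theta>h - \<theta>))^2"
proof -
  have "\<Psi> \<theta>h \<le> \<Psi> \<theta> + (\<theta>h - \<theta>) \<bullet> m \<theta> + L * (norm (\<theta>h - \<theta>))^2"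
  proof (rule descent[of "cball \<theta>h 1"])
    show "\<And>a b. a \<in> cball \<theta>h 1 \<Longrightarrow> b \<in> cball \<theta>h 1 \<Longrightarrow> norm (m a - m b) \<le> L * norm (a - b)"
      using L cball_K[OF th] by blast
    show "convex (cball \<theta>h 1)" by simp
    show "\<theta> \<in> cball \<theta>h 1" using assms(4) by (simp add: dist_norm norm_minus_commute)
    show "\<theta>h \<in> cball \<theta>h 1" by simp
    show "L \<ge> 0" using L by simp
  qed
  then show ?thesis unfolding D_def by simp
qed

lemma D_grad:
  assumes L: "L > 0" "\<forall>a\<in>K. \<forall>b\<in>K. norm (m a - m b) \<le> L * norm (a - b)"
    and th: "\<theta>h \<in> \<Theta>c" and t: "t \<ge> 0" "t * norm (m \<theta>h - m \<theta>) \<le> 1"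
  shows "D \<theta>h \<theta> \<ge> t * (norm (m \<theta>h - m \<theta>))^2 - L * t^2 * (norm (m \<theta>h - m \<theta>))^2"
proof -
  define wv where "wv = m \<theta>h - m \<theta>"
  define y where "y = \<theta>h - t *\<^sub>R wv"
  have ny: "norm (y - \<theta>h) = t * norm wv" unfolding y_def using t by simp
  have "\<Psi> y \<le> \<Psi> \<theta>h + (y - \<theta>h) \<bullet> m \<theta>h + L * (norm (y - \<theta>h))^2"
  proof (rule descent[of "cball \<theta>h 1"])
    show "\<And>a b. a \<in> cball \<theta>h 1 \<Longrightarrow> b \<in> cball \<theta>h 1 \<Longrightarrow> norm (m a - m b) \<le> L * norm (a - b)"
      using L cball_K[OF th] by blast
    show "y \<in> cball \<theta>h 1" using ny t unfolding wv_def by (simp add: dist_norm norm_minus_commute)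
    show "convex (cball \<theta>h 1)" by simp
    show "\<theta>h \<in> cball \<theta>h 1" by simp
    show "L \<ge> 0" using L by simp
  qed
  moreover have "\<Psi> y \<ge> \<Psi> \<theta> + (y - \<theta>) \<bullet> m \<theta>" by (rule subgrad)
  ultimately have "\<Psi> \<theta> + (y - \<theta>) \<bullet> m \<theta> \<le> \<Psi> \<theta>h + (y - \<theta>h) \<bullet> m \<theta>h + L * (t * norm wv)^2"
    using ny by simp
  moreover have "(y - \<theta>) \<bullet> m \<theta> = (\<theta>h - \<theta>) \<bullet> m \<theta> - t * (wv \<bullet> m \<theta>)"
    unfolding y_def by (simp add: inner_diff_left)
  moreover have "(y - \<theta>h) \<bullet> m \<theta>h = - t * (wv \<bullet> m \<theta>h)"
    unfolding y_def by (simp add: inner_diff_left)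
  moreover have "wv \<bullet> m \<theta>h - wv \<bullet> m \<theta> = (norm wv)^2"
    unfolding wv_def by (simp add: power2_norm_eq_inner inner_diff_right)
  ultimately have "t * (norm wv)^2 - L * t^2 * (norm wv)^2 \<le> D \<theta>h \<theta>"
    unfolding D_def by (simp add: algebra_simps power_mult_distrib)
  then show ?thesis unfolding wv_def .
qed

lemma upper_key:
  assumes "\<rho>b \<ge> 0"
  shows "\<exists>Cu>0. \<forall>\<theta>h\<in>\<Theta>c. \<forall>\<theta>. D \<theta>h \<theta> \<le> \<rho>b \<longrightarrow> (norm (m \<theta>h - m \<theta>))^2 \<le> Cu * D \<theta>h \<theta>"
proof -
  obtain L where L: "L > 0" "\<forall>a\<in>K. \<forall>b\<in>K. norm (m a - m b) \<le> L * norm (a - b)"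
    using K_lip by blast
  show ?thesis
  proof (intro exI[of _ "4 * L + 4 * \<rho>b"] conjI ballI allI impI)
    show "0 < 4 * L + 4 * \<rho>b" using L assms by simp
    fix \<theta>h \<theta> assume th: "\<theta>h \<in> \<Theta>c" and Db: "D \<theta>h \<theta> \<le> \<rho>b"
    define nw where "nw = norm (m \<theta>h - m \<theta>)"
    have nw0: "nw \<ge> 0" unfolding nw_def by simp
    have D0: "D \<theta>h \<theta> \<ge> 0" by (rule D_nonneg)
    show "(norm (m \<theta>h - m \<theta>))^2 \<le> (4 * L + 4 * \<rho>b) * D \<theta>h \<theta>"
    proof (cases "nw \<le> 2 * L")
      case True
      have "D \<theta>h \<theta> \<ge> (1 / (2 * L)) * (norm (m \<theta>h - m \<theta>))^2 - L * (1 / (2 * L))^2 * (norm (m \<theta>h - m \<theta>))^2"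
      proof (rule D_grad[OF L th])
        show "0 \<le> 1 / (2 * L)" using L by simp
        show "1 / (2 * L) * norm (m \<theta>h - m \<theta>) \<le> 1" using L True unfolding nw_def by (simp add: field_simps)
      qed
      then have "D \<theta>h \<theta> \<ge> (1 / (2 * L)) * nw^2 - L * (1 / (2 * L))^2 * nw^2" unfolding nw_def .
      also have "(1 / (2 * L)) * nw^2 - L * (1 / (2 * L))^2 * nw^2 = nw^2 / (4 * L)"
        using L by (simp add: field_simps power2_eq_square)
      finally have "nw^2 / (4 * L) \<le> D \<theta>h \<theta>" .
      then have "nw^2 \<le> D \<theta>h \<theta> * (4 * L)" using L by (simp add: pos_divide_le_eq)
      moreover have "(4 * L + 4 * \<rho>b) * D \<theta>h \<theta> = D \<theta>h \<theta> * (4 * L) + 4 * \<rho>b * D \<theta>h \<theta>"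
        by (simp add: algebra_simps)
      moreover have "4 * \<rho>b * D \<theta>h \<theta> \<ge> 0" using D0 assms by simp
      ultimately show ?thesis unfolding nw_def[symmetric] by linarith
    next
      case False
      then have nwp: "nw > 0" using L by simp
      have "D \<theta>h \<theta> \<ge> (1 / nw) * (norm (m \<theta>h - m \<theta>))^2 - L * (1 / nw)^2 * (norm (m \<theta>h - m \<theta>))^2"
      proof (rule D_grad[OF L th])
        show "0 \<le> 1 / nw" using nwp by simp
        show "1 / nw * norm (m \<theta>h - m \<theta>) \<le> 1" using nwp unfolding nw_def by simp
      qed
      then have "D \<theta>h \<theta> \<ge> (1 / nw) * nw^2 - L * (1 / nw)^2 * nw^2" unfolding nw_def .
      also have "(1 / nw) * nw^2 - L * (1 / nw)^2 * nw^2 = nw - L"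
        using nwp by (simp add: field_simps power2_eq_square)
      finally have "nw - L \<le> D \<theta>h \<theta>" .
      then have "nw \<le> 2 * D \<theta>h \<theta>" using False by linarith
      then have "nw \<le> 2 * \<rho>b" using Db by simp
      have "nw^2 = nw * nw" by (simp add: power2_eq_square)
      also have "\<dots> \<le> (2 * \<rho>b) * (2 * D \<theta>h \<theta>)"
        using \<open>nw \<le> 2 * D \<theta>h \<theta>\<close> \<open>nw \<le> 2 * \<rho>b\<close> nw0 by (intro mult_mono) auto
      finally have "nw^2 \<le> 4 * \<rho>b * D \<theta>h \<theta>" by simp
      moreover have "(4 * L + 4 * \<rho>b) * D \<theta>h \<theta> = 4 * L * D \<theta>h \<theta> + 4 * \<rho>b * D \<theta>h \<theta>"
        by (simp add: algebra_simps)
      moreover have "4 * L * D \<theta>h \<theta> \<ge> 0" using D0 L by simp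
      ultimately show ?thesis unfolding nw_def[symmetric] by linarith
    qed
  qed
qed

lemma exp_conv: "exp y \<ge> exp z * (1 + (y - z))" for y z :: real
proof -
  have "exp z * (1 + (y - z)) \<le> exp z * exp (y - z)" by (rule mult_left_mono[OF exp_ge_add_one_self]) simp
  then show ?thesis by (simp add: exp_diff)
qed

lemma key_ineq:
  fixes x a s :: real assumes s: "0 < s" "s \<le> 1"
  shows "(a - x) * (exp (-(s * x)) - exp (-(s * a))) \<ge> s * exp (- \<bar>x\<bar> - \<bar>a\<bar>) * (x - a)^2"
proof (cases "x \<le> a")
  case True
  have e1: "exp (-(s * x)) - exp (-(s * a)) \<ge> exp (-(s * a)) * (s * (a - x))"
  proof -
    have c: "exp (-(s * x)) \<ge> exp (-(s * a)) * (1 + (-(s * x) - -(s * a)))" by (rule exp_conv)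
    have "exp (-(s * a)) * (1 + (-(s * x) - -(s * a))) = exp (-(s * a)) + exp (-(s * a)) * (s * (a - x))"
      by (simp add: algebra_simps)
    then show ?thesis using c by linarith
  qed
  have "-(s * a) \<ge> - \<bar>x\<bar> - \<bar>a\<bar>"
  proof -
    have "s * a \<le> \<bar>s * a\<bar>" by simp
    also have "\<dots> = s * \<bar>a\<bar>" using s by (simp add: abs_mult)
    also have "\<dots> \<le> 1 * \<bar>a\<bar>" using s by (intro mult_right_mono) auto
    finally show ?thesis by simp
  qed
  then have e2: "exp (-(s * a)) \<ge> exp (- \<bar>x\<bar> - \<bar>a\<bar>)" by simp
  have "s * exp (- \<bar>x\<bar> - \<bar>a\<bar>) * (x - a)^2 = (a - x) * (exp (- \<bar>x\<bar> - \<bar>a\<bar>) * (s * (a - x)))"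
    by (simp add: power2_eq_square algebra_simps)
  also have "\<dots> \<le> (a - x) * (exp (-(s * a)) * (s * (a - x)))"
    using True s e2 by (intro mult_left_mono mult_right_mono) auto
  also have "\<dots> \<le> (a - x) * (exp (-(s * x)) - exp (-(s * a)))"
    using True e1 by (intro mult_left_mono) auto
  finally show ?thesis .
next
  case False
  have e1: "exp (-(s * a)) - exp (-(s * x)) \<ge> exp (-(s * x)) * (s * (x - a))"
  proof -
    have c: "exp (-(s * a)) \<ge> exp (-(s * x)) * (1 + (-(s * a) - -(s * x)))" by (rule exp_conv)
    have "exp (-(s * x)) * (1 + (-(s * a) - -(s * x))) = exp (-(s * x)) + exp (-(s * x)) * (s * (x - a))"
      by (simp add: algebra_simps)
    then show ?thesis using c by linarith
  qed
  have "-(s * x) \<ge> - \<bar>x\<bar> - \<bar>a\<bar>"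
  proof -
    have "s * x \<le> \<bar>s * x\<bar>" by simp
    also have "\<dots> = s * \<bar>x\<bar>" using s by (simp add: abs_mult)
    also have "\<dots> \<le> 1 * \<bar>x\<bar>" using s by (intro mult_right_mono) auto
    finally show ?thesis by simp
  qed
  then have e2: "exp (-(s * x)) \<ge> exp (- \<bar>x\<bar> - \<bar>a\<bar>)" by simp
  have "s * exp (- \<bar>x\<bar> - \<bar>a\<bar>) * (x - a)^2 = (x - a) * (exp (- \<bar>x\<bar> - \<bar>a\<bar>) * (s * (x - a)))"
    by (simp add: power2_eq_square algebra_simps)
  also have "\<dots> \<le> (x - a) * (exp (-(s * x)) * (s * (x - a)))"
    using False s e2 by (intro mult_left_mono mult_right_mono) auto
  also have "\<dots> \<le> (x - a) * (exp (-(s * a)) - exp (-(s * x)))"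
    using False e1 by (intro mult_left_mono) auto
  also have "\<dots> = (a - x) * (exp (-(s * x)) - exp (-(s * a)))" by (simp add: algebra_simps)
  finally show ?thesis .
qed

lemma exp_s_le: assumes "0 \<le> s" "s \<le> (1::real)" shows "exp (-(s * x)) \<le> exp x + exp (-x)"
proof -
  have "-(s * x) \<le> \<bar>x\<bar>"
  proof -
    have "-(s * x) \<le> \<bar>s * x\<bar>" by simp
    also have "\<dots> = s * \<bar>x\<bar>" using assms by (simp add: abs_mult)
    also have "\<dots> \<le> 1 * \<bar>x\<bar>" using assms by (intro mult_right_mono) auto
    finally show ?thesis by simp
  qed
  then have "exp (-(s * x)) \<le> exp \<bar>x\<bar>" by simp
  also have "\<dots> \<le> exp x + exp (-x)" by (cases "x \<ge> 0") auto
  finally show ?thesis .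
qed

lemma w_shift: "w (\<theta> - s *\<^sub>R u) y = w \<theta> y * exp (-(s * (u \<bullet> T y)))"
  using w_diff[of \<theta> "s *\<^sub>R u" y] by simp

lemma U_int: "integrable \<nu> (\<lambda>y. w \<theta> y * ((a - u \<bullet> T y) * (exp (-(s * (u \<bullet> T y))) - exp (-(s * a)))))"
proof -
  have eq: "w \<theta> y * ((a - u \<bullet> T y) * (exp (-(s * (u \<bullet> T y))) - exp (-(s * a))))
     = a * w (\<theta> - s *\<^sub>R u) y - w (\<theta> - s *\<^sub>R u) y * (u \<bullet> T y) - exp (-(s * a)) * (a * w \<theta> y - w \<theta> y * (u \<bullet> T y))" for y
    unfolding w_shift by (simp add: algebra_simps)
  show ?thesis unfolding eq using w_int wT_int by auto
qed

definition N :: "real^'p \<Rightarrow> real^'p \<Rightarrow> real" where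
  "N \<theta> u = (\<integral>y. w \<theta> y * (exp (- \<bar>u \<bullet> T y\<bar>) * (u \<bullet> T y - u \<bullet> m \<theta>)^2) \<partial>\<nu>)"

lemma N_int: "integrable \<nu> (\<lambda>y. w \<theta> y * (exp (- \<bar>u \<bullet> T y\<bar>) * (u \<bullet> T y - u \<bullet> m \<theta>)^2))"
proof (rule Bochner_Integration.integrable_bound)
  define a where "a = u \<bullet> m \<theta>"
  show "integrable \<nu> (\<lambda>y. exp \<bar>a\<bar> * (w \<theta> y * ((a - u \<bullet> T y) * (exp (-(1 * (u \<bullet> T y))) - exp (-(1 * a))))))"
    using U_int[of \<theta> a u 1] by simp
  show "(\<lambda>y. w \<theta> y * (exp (- \<bar>u \<bullet> T y\<bar>) * (u \<bullet> T y - u \<bullet> m \<theta>)^2)) \<in> borel_measurable \<nu>"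
    by measurable
  show "AE y in \<nu>. norm (w \<theta> y * (exp (- \<bar>u \<bullet> T y\<bar>) * (u \<bullet> T y - u \<bullet> m \<theta>)^2))
      \<le> norm (exp \<bar>a\<bar> * (w \<theta> y * ((a - u \<bullet> T y) * (exp (-(1 * (u \<bullet> T y))) - exp (-(1 * a))))))"
  proof (intro AE_I2)
    fix y
    define x where "x = u \<bullet> T y"
    have k: "1 * exp (- \<bar>x\<bar> - \<bar>a\<bar>) * (x - a)^2 \<le> (a - x) * (exp (-(1 * x)) - exp (-(1 * a)))"
      by (rule key_ineq) auto
    have "exp (- \<bar>x\<bar>) * (x - a)^2 = exp \<bar>a\<bar> * (1 * exp (- \<bar>x\<bar> - \<bar>a\<bar>) * (x - a)^2)"
      by (simp add: exp_diff exp_minus field_simps)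
    also have "\<dots> \<le> exp \<bar>a\<bar> * ((a - x) * (exp (-(1 * x)) - exp (-(1 * a))))"
      using k by (intro mult_left_mono) auto
    finally have "w \<theta> y * (exp (- \<bar>x\<bar>) * (x - a)^2) \<le> w \<theta> y * (exp \<bar>a\<bar> * ((a - x) * (exp (-(1 * x)) - exp (-(1 * a)))))"
      using w_nonneg by (intro mult_left_mono) auto
    moreover have "0 \<le> w \<theta> y * (exp (- \<bar>x\<bar>) * (x - a)^2)" using w_nonneg by simp
    ultimately show "norm (w \<theta> y * (exp (- \<bar>u \<bullet> T y\<bar>) * (u \<bullet> T y - u \<bullet> m \<theta>)^2))
      \<le> norm (exp \<bar>a\<bar> * (w \<theta> y * ((a - u \<bullet> T y) * (exp (-(1 * (u \<bullet> T y))) - exp (-(1 * a))))))"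
      unfolding x_def[symmetric] a_def[symmetric] by (simp add: mult_ac)
  qed
qed

lemma N_nonneg: "N \<theta> u \<ge> 0"
  unfolding N_def using w_nonneg by (intro integral_nonneg_AE) auto

lemma mono_lower:
  assumes s: "0 < s" "s \<le> 1"
  shows "(m \<theta>h - m (\<theta>h - s *\<^sub>R u)) \<bullet> u \<ge> s * exp (- \<bar>u \<bullet> m \<theta>h\<bar>) * N \<theta>h u / (Z (\<theta>h + u) + Z (\<theta>h - u))"
proof -
  define a where "a = u \<bullet> m \<theta>h"
  define \<theta> where "\<theta> = \<theta>h - s *\<^sub>R u"
  define Num where "Num = (\<integral>y. w \<theta>h y * ((a - u \<bullet> T y) * (exp (-(s * (u \<bullet> T y))) - exp (-(s * a)))) \<partial>\<nu>)"
  have Zth: "Z \<theta>h > 0" "Z \<theta> > 0" by (rule Z_pos)+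
  have ia: "(\<integral>y. w \<theta>h y * (u \<bullet> T y) \<partial>\<nu>) = a * Z \<theta>h"
    unfolding a_def m_inner using Zth by simp
  have ib: "(\<integral>y. w \<theta> y * (u \<bullet> T y) \<partial>\<nu>) = (u \<bullet> m \<theta>) * Z \<theta>"
    unfolding m_inner using Zth by simp
  have eq: "w \<theta>h y * ((a - u \<bullet> T y) * (exp (-(s * (u \<bullet> T y))) - exp (-(s * a))))
     = a * w \<theta> y - w \<theta> y * (u \<bullet> T y) - exp (-(s * a)) * (a * w \<theta>h y - w \<theta>h y * (u \<bullet> T y))" for y
    unfolding \<theta>_def w_shift by (simp add: algebra_simps)
  have "Num = a * Z \<theta> - (u \<bullet> m \<theta>) * Z \<theta> - exp (-(s * a)) * (a * Z \<theta>h - a * Z \<theta>h)"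
    unfolding Num_def eq using w_int wT_int ia ib by (simp add: Z_def)
  then have "Num = Z \<theta> * ((m \<theta>h - m \<theta>) \<bullet> u)"
    by (simp add: a_def inner_diff_left inner_commute algebra_simps)
  then have NumZ: "Num / Z \<theta> = (m \<theta>h - m \<theta>) \<bullet> u"
    using Zth by simp
  have lowint: "integrable \<nu> (\<lambda>y. (s * exp (- \<bar>a\<bar>)) * (w \<theta>h y * (exp (- \<bar>u \<bullet> T y\<bar>) * (u \<bullet> T y - a)^2)))"
    using N_int[of \<theta>h u] unfolding a_def by auto
  have "s * exp (- \<bar>a\<bar>) * N \<theta>h u = (\<integral>y. (s * exp (- \<bar>a\<bar>)) * (w \<theta>h y * (exp (- \<bar>u \<bullet> T y\<bar>) * (u \<bullet> T y - a)^2)) \<partial>\<nu>)"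
    unfolding N_def a_def by simp
  also have "\<dots> \<le> Num" unfolding Num_def
  proof (rule integral_mono[OF lowint U_int])
    fix y
    define x where "x = u \<bullet> T y"
    have "s * exp (- \<bar>x\<bar> - \<bar>a\<bar>) * (x - a)^2 \<le> (a - x) * (exp (-(s * x)) - exp (-(s * a)))"
      by (rule key_ineq[OF s])
    then have "w \<theta>h y * (s * exp (- \<bar>x\<bar> - \<bar>a\<bar>) * (x - a)^2) \<le> w \<theta>h y * ((a - x) * (exp (-(s * x)) - exp (-(s * a))))"
      using w_nonneg by (intro mult_left_mono) auto
    moreover have "exp (- \<bar>x\<bar> - \<bar>a\<bar>) = exp (- \<bar>a\<bar>) * exp (- \<bar>x\<bar>)"
      by (simp add: exp_add[symmetric])
    ultimately have "w \<theta>h y * (s * (exp (- \<bar>a\<bar>) * exp (- \<bar>x\<bar>)) * (x - a)^2) \<le> w \<theta>h y * ((a - x) * (exp (-(s * x)) - exp (-(s * a))))"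
      by simp
    then show "(s * exp (- \<bar>a\<bar>)) * (w \<theta>h y * (exp (- \<bar>u \<bullet> T y\<bar>) * (u \<bullet> T y - a)^2)) \<le> w \<theta>h y * ((a - u \<bullet> T y) * (exp (-(s * (u \<bullet> T y))) - exp (-(s * a))))"
      unfolding x_def[symmetric] by (simp add: mult_ac)
  qed
  finally have lowN: "s * exp (- \<bar>a\<bar>) * N \<theta>h u \<le> Num" .
  have "Z \<theta> = (\<integral>y. w \<theta>h y * exp (-(s * (u \<bullet> T y))) \<partial>\<nu>)"
    unfolding Z_def \<theta>_def w_shift ..
  also have "\<dots> \<le> (\<integral>y. w (\<theta>h + u) y + w (\<theta>h - u) y \<partial>\<nu>)"
  proof (rule integral_mono)
    show "integrable \<nu> (\<lambda>y. w \<theta>h y * exp (-(s * (u \<bullet> T y))))"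
      using w_int[of "\<theta>h - s *\<^sub>R u"] unfolding w_shift .
    show "integrable \<nu> (\<lambda>y. w (\<theta>h + u) y + w (\<theta>h - u) y)" using w_int by auto
    fix y
    show "w \<theta>h y * exp (-(s * (u \<bullet> T y))) \<le> w (\<theta>h + u) y + w (\<theta>h - u) y"
      unfolding w_add w_diff distrib_left[symmetric]
      using w_nonneg exp_s_le[of s "u \<bullet> T y"] s by (intro mult_left_mono) auto
  qed
  also have "\<dots> = Z (\<theta>h + u) + Z (\<theta>h - u)" unfolding Z_def using w_int by simp
  finally have Zle: "Z \<theta> \<le> Z (\<theta>h + u) + Z (\<theta>h - u)" .
  have low0: "0 \<le> s * exp (- \<bar>a\<bar>) * N \<theta>h u" using s N_nonneg by simp
  have "s * exp (- \<bar>a\<bar>) * N \<theta>h u / (Z (\<theta>h + u) + Z (\<theta>h - u)) \<le> s * exp (- \<bar>a\<bar>) * N \<theta>h u / Z \<theta>"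
    using Zle Zth low0 by (intro divide_left_mono) auto
  also have "\<dots> \<le> Num / Z \<theta>" using lowN Zth by (intro divide_right_mono) auto
  finally show ?thesis using NumZ unfolding a_def \<theta>_def by simp
qed

definition kf :: "real^'p \<Rightarrow> real^'p \<Rightarrow> 'y \<Rightarrow> real" where
  "kf \<theta> u y = w \<theta> y * (exp (- \<bar>u \<bullet> T y\<bar>) * (u \<bullet> T y - u \<bullet> m \<theta>)^2)"

lemma kf_nonneg: "kf \<theta> u y \<ge> 0" unfolding kf_def using w_nonneg by simp

lemma kf_meas[measurable]: "kf \<theta> u \<in> borel_measurable \<nu>" unfolding kf_def by measurable

lemma nn_kf: "(\<integral>\<^sup>+ y. ennreal (kf \<theta> u y) \<partial>\<nu>) = ennreal (N \<theta> u)"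
  unfolding N_def kf_def[symmetric]
  using N_int[of \<theta> u] kf_nonneg by (intro nn_integral_eq_integral) (auto simp: kf_def)

lemma N_pos: "\<exists>n0>0. \<forall>\<theta>\<in>\<Theta>c. \<forall>u. norm u = 1 \<longrightarrow> N \<theta> u \<ge> n0"
proof (rule ccontr)
  assume H: "\<not> (\<exists>n0>0. \<forall>\<theta>\<in>\<Theta>c. \<forall>u. norm u = 1 \<longrightarrow> N \<theta> u \<ge> n0)"
  have "\<forall>n::nat. \<exists>p. fst p \<in> \<Theta>c \<and> norm (snd p) = 1 \<and> N (fst p) (snd p) < inverse (real (Suc n))"
  proof
    fix n :: nat
    have "inverse (real (Suc n)) > 0" by simp
    with H obtain \<theta> u where "\<theta> \<in> \<Theta>c" "norm u = 1" "\<not> N \<theta> u \<ge> inverse (real (Suc n))"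
      by blast
    then show "\<exists>p. fst p \<in> \<Theta>c \<and> norm (snd p) = 1 \<and> N (fst p) (snd p) < inverse (real (Suc n))"
      by (intro exI[of _ "(\<theta>, u)"]) auto
  qed
  from choice[OF this] obtain q where
    q: "\<And>n. fst (q n) \<in> \<Theta>c" "\<And>n. norm (snd (q n)) = 1" "\<And>n. N (fst (q n)) (snd (q n)) < inverse (real (Suc n))"
    by blast
  have cS: "compact (\<Theta>c \<times> sphere (0::real^'p) 1)" by (intro compact_Times Theta_c compact_sphere)
  have "\<forall>n. q n \<in> \<Theta>c \<times> sphere 0 1" using q by (auto simp: mem_Times_iff)
  from seq_compactE[OF compact_imp_seq_compact[OF cS] this] obtain l r where
    l: "l \<in> \<Theta>c \<times> sphere 0 1" and r: "strict_mono r" and lim: "(q \<circ> r) \<longlonglongrightarrow> l"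
    by blast
  define \<theta>s where "\<theta>s = fst l"
  define us where "us = snd l"
  have us1: "norm us = 1" using l unfolding us_def by (auto simp: mem_Times_iff)
  have limt: "(\<lambda>n. fst (q (r n))) \<longlonglongrightarrow> \<theta>s"
    using tendsto_fst[OF lim] unfolding \<theta>s_def by (simp add: o_def)
  have limu: "(\<lambda>n. snd (q (r n))) \<longlonglongrightarrow> us"
    using tendsto_snd[OF lim] unfolding us_def by (simp add: o_def)
  have limm: "(\<lambda>n. m (fst (q (r n)))) \<longlonglongrightarrow> m \<theta>s"
    using m_cont limt by (intro isCont_tendsto_compose[of _ m]) (auto simp: continuous_on_eq_continuous_at)
  have pw: "(\<lambda>n. kf (fst (q (r n))) (snd (q (r n))) y) \<longlonglongrightarrow> kf \<theta>s us y" for y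
    unfolding kf_def w_def by (intro tendsto_intros limt limu limm)
  have "(\<integral>\<^sup>+ y. liminf (\<lambda>n. ennreal (kf (fst (q (r n))) (snd (q (r n))) y)) \<partial>\<nu>)
      \<le> liminf (\<lambda>n. \<integral>\<^sup>+ y. ennreal (kf (fst (q (r n))) (snd (q (r n))) y) \<partial>\<nu>)"
    by (rule nn_integral_liminf) simp
  moreover have "liminf (\<lambda>n. ennreal (kf (fst (q (r n))) (snd (q (r n))) y)) = ennreal (kf \<theta>s us y)" for y
    by (intro lim_imp_Liminf tendsto_ennrealI pw) simp
  moreover have "liminf (\<lambda>n. \<integral>\<^sup>+ y. ennreal (kf (fst (q (r n))) (snd (q (r n))) y) \<partial>\<nu>) \<le> 0"
  proof -
    have "liminf (\<lambda>n. \<integral>\<^sup>+ y. ennreal (kf (fst (q (r n))) (snd (q (r n))) y) \<partial>\<nu>)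
        \<le> liminf (\<lambda>n. ennreal (inverse (real (Suc n))))"
    proof (intro Liminf_mono always_eventually allI)
      fix n
      have "N (fst (q (r n))) (snd (q (r n))) < inverse (real (Suc (r n)))" by (rule q)
      also have "inverse (real (Suc (r n))) \<le> inverse (real (Suc n))"
        using seq_suble[OF r, of n] by (simp add: field_simps)
      finally show "(\<integral>\<^sup>+ y. ennreal (kf (fst (q (r n))) (snd (q (r n))) y) \<partial>\<nu>) \<le> ennreal (inverse (real (Suc n)))"
        unfolding nn_kf by (intro ennreal_leI) simp
    qed
    also have "liminf (\<lambda>n. ennreal (inverse (real (Suc n)))) = ennreal 0"
      by (intro lim_imp_Liminf tendsto_ennrealI LIMSEQ_inverse_real_of_nat) simp
    finally show ?thesis by simp
  qed
  ultimately have "(\<integral>\<^sup>+ y. ennreal (kf \<theta>s us y) \<partial>\<nu>) = 0" by (metis (no_types, lifting) le_zero_eq nn_integral_cong)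
  then have "AE y in \<nu>. ennreal (kf \<theta>s us y) = 0"
    by (subst (asm) nn_integral_0_iff_AE) auto
  then have "AE y in \<nu>. h y > 0 \<longrightarrow> us \<bullet> T y = us \<bullet> m \<theta>s"
  proof eventually_elim
    case (elim y)
    show ?case
    proof
      assume "h y > 0"
      then have "w \<theta>s y > 0" unfolding w_def by simp
      moreover have "kf \<theta>s us y = 0" using elim kf_nonneg[of \<theta>s us y] by simp
      ultimately have "(us \<bullet> T y - us \<bullet> m \<theta>s)^2 = 0" unfolding kf_def by simp
      then show "us \<bullet> T y = us \<bullet> m \<theta>s" by simp
    qed
  qed
  from regular[unfolded affinely_independent_stat_def, rule_format, OF this]
  have "us = 0" by simp
  with us1 show False by simp
qed

lemma strong_mono: "\<exists>c>0. \<forall>\<theta>h\<in>\<Theta>c. \<forall>u. norm u = 1 \<longrightarrow> (\<forall>s. 0 < s \<and> s \<le> 1 \<longrightarrow> (m \<theta>h - m (\<theta>h - s *\<^sub>R u)) \<bullet> u \<ge> c * s)"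
proof -
  obtain n0 where n0: "n0 > 0" "\<And>\<theta> u. \<theta> \<in> \<Theta>c \<Longrightarrow> norm u = 1 \<Longrightarrow> N \<theta> u \<ge> n0"
    using N_pos by blast
  have "compact (m ` \<Theta>c)"
    using m_cont Theta_c by (intro compact_continuous_image) (auto intro: continuous_on_subset)
  then obtain Mm where Mm: "\<And>\<theta>. \<theta> \<in> \<Theta>c \<Longrightarrow> norm (m \<theta>) \<le> Mm"
    using compact_imp_bounded bounded_iff by (metis imageI)
  have "compact (Z ` K)"
    using Z_cont K_compact by (intro compact_continuous_image) (auto intro: continuous_on_subset)
  then obtain Zb where Zb: "\<And>x. x \<in> K \<Longrightarrow> norm (Z x) \<le> Zb"
    using compact_imp_bounded bounded_iff by (metis imageI)
  define Zm where "Zm = max Zb 1"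
  have Zm1: "Z x \<le> Zm" if "x \<in> K" for x
  proof -
    have "Z x \<le> \<bar>Z x\<bar>" by simp
    also have "\<dots> \<le> Zb" using Zb[OF that] by simp
    also have "Zb \<le> Zm" unfolding Zm_def by simp
    finally show ?thesis .
  qed
  have Zm: "\<And>x. x \<in> K \<Longrightarrow> Z x \<le> Zm" "Zm > 0" using Zm1 unfolding Zm_def by auto
  define c where "c = exp (- Mm) * n0 / (2 * Zm)"
  show ?thesis
  proof (intro exI[of _ c] conjI ballI allI impI)
    show "c > 0" unfolding c_def using n0 Zm by simp
    fix \<theta>h u :: "real^'p" and s :: real
    assume th: "\<theta>h \<in> \<Theta>c" and u: "norm u = 1" and s: "0 < s \<and> s \<le> 1"
    have "\<theta>h + u \<in> cball \<theta>h 1" "\<theta>h - u \<in> cball \<theta>h 1" using u by (auto simp: dist_norm)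
    then have "\<theta>h + u \<in> K" "\<theta>h - u \<in> K" using cball_K[OF th] by auto
    then have Zp: "Z (\<theta>h + u) \<le> Zm" "Z (\<theta>h - u) \<le> Zm" using Zm(1) by auto
    have Zpos: "Z (\<theta>h + u) + Z (\<theta>h - u) > 0" using Z_pos[of "\<theta>h + u"] Z_pos[of "\<theta>h - u"] by simp
    have "\<bar>u \<bullet> m \<theta>h\<bar> \<le> norm u * norm (m \<theta>h)" by (rule Cauchy_Schwarz_ineq2)
    also have "\<dots> \<le> Mm" using u Mm[OF th] by simp
    finally have ea: "exp (- \<bar>u \<bullet> m \<theta>h\<bar>) \<ge> exp (- Mm)" by simp
    have Nn: "N \<theta>h u \<ge> n0" using n0(2)[OF th u] .
    have "c * s = s * exp (- Mm) * n0 / (2 * Zm)" unfolding c_def by simp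
    also have "\<dots> \<le> s * exp (- \<bar>u \<bullet> m \<theta>h\<bar>) * N \<theta>h u / (2 * Zm)"
      using s ea Nn n0 Zm by (intro divide_right_mono mult_mono mult_left_mono) auto
    also have "\<dots> \<le> s * exp (- \<bar>u \<bullet> m \<theta>h\<bar>) * N \<theta>h u / (Z (\<theta>h + u) + Z (\<theta>h - u))"
      using s N_nonneg Zp Zpos by (intro divide_left_mono) auto
    also have "\<dots> \<le> (m \<theta>h - m (\<theta>h - s *\<^sub>R u)) \<bullet> u"
      using s by (intro mono_lower) auto
    finally show "c * s \<le> (m \<theta>h - m (\<theta>h - s *\<^sub>R u)) \<bullet> u" .
  qed
qed

lemma WR_eq: "worst_risk \<nu> h T \<theta>h \<rho> v = (SUP \<theta>\<in>{\<theta>. D \<theta>h \<theta> \<le> \<rho>}. ereal (\<Psi> v - m \<theta> \<bullet> v))"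
  by (simp add: worst_risk_def Theta_full KL_eq grad_eq D_def)

lemma final:
  assumes rb: "\<rho>bar > 0"
  shows "\<exists>mm MM. 0 < mm \<and> mm < MM \<and>
           (\<forall>v \<rho> \<theta>h. 0 \<le> \<rho> \<and> \<rho> \<le> \<rho>bar \<and> \<theta>h \<in> \<Theta>c \<longrightarrow>
              ereal (sqrt (2 * \<rho> / MM) * norm v)
                \<le> worst_risk \<nu> h T \<theta>h \<rho> v - worst_risk \<nu> h T \<theta>h 0 v
            \<and> worst_risk \<nu> h T \<theta>h \<rho> v - worst_risk \<nu> h T \<theta>h 0 v
                \<le> ereal (sqrt (2 * \<rho> / mm) * norm v))"
proof -
  obtain Cu where Cu: "Cu > 0" "\<And>\<theta>h \<theta>. \<theta>h \<in> \<Theta>c \<Longrightarrow> D \<theta>h \<theta> \<le> \<rho>bar \<Longrightarrow> (norm (m \<theta>h - m \<theta>))^2 \<le> Cu * D \<theta>h \<theta>"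
    using upper_key[of \<rho>bar] rb by auto
  obtain L where L: "L > 0" "\<forall>a\<in>K. \<forall>b\<in>K. norm (m a - m b) \<le> L * norm (a - b)"
    using K_lip by blast
  obtain c where c: "c > 0" "\<And>\<theta>h u s. \<theta>h \<in> \<Theta>c \<Longrightarrow> norm u = 1 \<Longrightarrow> 0 < s \<Longrightarrow> s \<le> 1 \<Longrightarrow> (m \<theta>h - m (\<theta>h - s *\<^sub>R u)) \<bullet> u \<ge> c * s"
    using strong_mono by blast
  define mm where "mm = 2 / Cu"
  define MM where "MM = mm + 1 + 2 * L / c^2 + 2 * \<rho>bar / c^2"
  have mm0: "mm > 0" unfolding mm_def using Cu by simp
  have aux: "2 * L / c^2 \<ge> 0" "2 * \<rho>bar / c^2 \<ge> 0" using L rb by auto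
  have mmMM: "mm < MM" unfolding MM_def using aux by simp
  have MM0: "MM > 0" using mm0 mmMM by simp
  have cMM: "c^2 * MM \<ge> 2 * L + 2 * \<rho>bar"
  proof -
    have "c^2 * MM = c^2 * (mm + 1) + 2 * L + 2 * \<rho>bar"
      unfolding MM_def using c(1) by (simp add: field_simps)
    moreover have "c^2 * (mm + 1) \<ge> 0" using mm0 by simp
    ultimately show ?thesis by linarith
  qed
  show ?thesis
  proof (rule exI[of _ mm], rule exI[of _ MM], intro conjI allI impI mm0 mmMM)
    fix v \<theta>h :: "real^'p" and \<rho> :: real
    assume H: "0 \<le> \<rho> \<and> \<rho> \<le> \<rho>bar \<and> \<theta>h \<in> \<Theta>c"
    then have H1: "0 \<le> \<rho>" "\<rho> \<le> \<rho>bar" "\<theta>h \<in> \<Theta>c" by auto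
    define A where "A = \<Psi> v - m \<theta>h \<bullet> v"
    define B where "B = sqrt (2 * \<rho> / mm) * norm v"
    define Bl where "Bl = sqrt (2 * \<rho> / MM) * norm v"
    have Dz: "D \<theta>h \<theta>h = 0" by (simp add: D_def)
    have split: "\<Psi> v - m \<theta> \<bullet> v = A + (m \<theta>h - m \<theta>) \<bullet> v" for \<theta>
      unfolding A_def by (simp add: inner_diff_left)
    have up: "\<Psi> v - m \<theta> \<bullet> v \<le> A + B" if th: "D \<theta>h \<theta> \<le> \<rho>" for \<theta>
    proof -
      have "(norm (m \<theta>h - m \<theta>))^2 \<le> Cu * D \<theta>h \<theta>" using Cu(2)[OF H1(3)] th H1 by simp
      also have "\<dots> \<le> Cu * \<rho>" using th Cu by simp
      finally have "norm (m \<theta>h - m \<theta>) \<le> sqrt (Cu * \<rho>)" by (rule real_le_rsqrt)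
      moreover have "sqrt (2 * \<rho> / mm) = sqrt (Cu * \<rho>)" unfolding mm_def using Cu by simp
      ultimately have "norm (m \<theta>h - m \<theta>) * norm v \<le> sqrt (2 * \<rho> / mm) * norm v"
        by (simp add: mult_right_mono)
      moreover have "(m \<theta>h - m \<theta>) \<bullet> v \<le> norm (m \<theta>h - m \<theta>) * norm v" by (rule norm_cauchy_schwarz)
      ultimately show ?thesis unfolding split B_def by simp
    qed
    have WR0: "worst_risk \<nu> h T \<theta>h 0 v = ereal A"
    proof -
      have "m \<theta> = m \<theta>h" if "D \<theta>h \<theta> \<le> 0" for \<theta>
      proof -
        have "(norm (m \<theta>h - m \<theta>))^2 \<le> Cu * D \<theta>h \<theta>" using Cu(2)[OF H1(3)] that rb by simp
        also have "\<dots> \<le> 0" using that Cu by (simp add: mult_nonneg_nonpos)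
        finally show ?thesis by simp
      qed
      then have "(SUP \<theta>\<in>{\<theta>. D \<theta>h \<theta> \<le> 0}. ereal (\<Psi> v - m \<theta> \<bullet> v)) = (SUP \<theta>\<in>{\<theta>. D \<theta>h \<theta> \<le> 0}. ereal A)"
        unfolding A_def by (intro SUP_cong) auto
      also have "\<dots> = ereal A" using Dz by (intro SUP_const) (auto intro!: exI[of _ \<theta>h])
      finally show ?thesis unfolding WR_eq .
    qed
    have ge: "ereal (\<Psi> v - m \<theta> \<bullet> v) \<le> worst_risk \<nu> h T \<theta>h \<rho> v" if "D \<theta>h \<theta> \<le> \<rho>" for \<theta>
      unfolding WR_eq using that by (intro SUP_upper) auto
    have le: "worst_risk \<nu> h T \<theta>h \<rho> v \<le> ereal (A + B)"
      unfolding WR_eq using up by (intro SUP_least) auto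
    have geA: "ereal A \<le> worst_risk \<nu> h T \<theta>h \<rho> v" using ge[of \<theta>h] Dz H1 unfolding A_def by simp
    obtain r where r: "worst_risk \<nu> h T \<theta>h \<rho> v = ereal r"
      using le geA by (cases "worst_risk \<nu> h T \<theta>h \<rho> v") auto
    have rB: "r \<le> A + B" using le r by simp
    have rA: "A \<le> r" using geA r by simp
    have lowr: "A + Bl \<le> r"
    proof (cases "\<rho> = 0 \<or> v = 0")
      case True
      then have "Bl = 0" unfolding Bl_def by auto
      then show ?thesis using rA by simp
    next
      case False
      then have \<rho>0: "\<rho> > 0" and v0: "v \<noteq> 0" using H1 by auto
      define u where "u = (1 / norm v) *\<^sub>R v"
      have u1: "norm u = 1" unfolding u_def using v0 by simp
      have vu: "v = norm v *\<^sub>R u" unfolding u_def using v0 by simp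
      define s where "s = (if \<rho> \<le> L then sqrt (\<rho> / L) else 1)"
      have s0: "0 < s" unfolding s_def using \<rho>0 L by auto
      have s1: "s \<le> 1" unfolding s_def using \<rho>0 L by auto
      have sL: "L * s^2 \<le> \<rho>" unfolding s_def using \<rho>0 L by auto
      have cs: "2 * \<rho> \<le> c^2 * s^2 * MM"
      proof (cases "\<rho> \<le> L")
        case True
        then have "s^2 = \<rho> / L" unfolding s_def using \<rho>0 L by simp
        then have "c^2 * s^2 * MM = (\<rho> / L) * (c^2 * MM)" by simp
        also have "\<dots> \<ge> (\<rho> / L) * (2 * L)" using cMM \<rho>0 L rb by (intro mult_left_mono) auto
        finally show ?thesis using L by simp
      next
        case False
        then have "s = 1" unfolding s_def by simp
        then show ?thesis using cMM H1 L by simp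
      qed
      define \<theta> where "\<theta> = \<theta>h - s *\<^sub>R u"
      have "norm (\<theta> - \<theta>h) \<le> 1" unfolding \<theta>_def using u1 s0 s1 by simp
      from D_upper[OF L H1(3) this] have "D \<theta>h \<theta> \<le> L * (norm (\<theta>h - \<theta>))^2" .
      also have "norm (\<theta>h - \<theta>) = s" unfolding \<theta>_def using u1 s0 by simp
      finally have "D \<theta>h \<theta> \<le> \<rho>" using sL by simp
      from ge[OF this] r have rt: "\<Psi> v - m \<theta> \<bullet> v \<le> r" by simp
      have mono: "(m \<theta>h - m \<theta>) \<bullet> u \<ge> c * s" unfolding \<theta>_def using c(2)[OF H1(3) u1 s0 s1] .
      have "sqrt (2 * \<rho> / MM) \<le> c * s"
      proof (rule real_le_lsqrt)
        show "0 \<le> c * s" using c s0 by simp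
        show "2 * \<rho> / MM \<le> (c * s)^2" using cs MM0 by (simp add: pos_divide_le_eq power_mult_distrib mult_ac)
      qed
      then have "Bl \<le> c * s * norm v" unfolding Bl_def by (simp add: mult_right_mono)
      also have "\<dots> \<le> ((m \<theta>h - m \<theta>) \<bullet> u) * norm v" using mono by (simp add: mult_right_mono)
      also have "\<dots> = (m \<theta>h - m \<theta>) \<bullet> v" by (subst (2) vu) (simp add: mult_ac)
      finally show ?thesis using rt split[of \<theta>] by simp
    qed
    show "ereal (sqrt (2 * \<rho> / MM) * norm v) \<le> worst_risk \<nu> h T \<theta>h \<rho> v - worst_risk \<nu> h T \<theta>h 0 v"
      unfolding r WR0 using lowr Bl_def by simp
    show "worst_risk \<nu> h T \<theta>h \<rho> v - worst_risk \<nu> h T \<theta>h 0 v \<le> ereal (sqrt (2 * \<rho> / mm) * norm v)"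
      unfolding r WR0 using rB B_def by simp
  qed
qed

end

theorem lemmaC2:
  fixes \<nu> :: "'y::euclidean_space measure"
    and h :: "'y \<Rightarrow> real"
    and T :: "'y \<Rightarrow> real ^ 'p"
    and \<Theta>c :: "(real ^ 'p) set"
    and \<rho>bar :: real
  assumes sets_nu: "sets \<nu> = sets borel"
    and h_meas: "h \<in> borel_measurable \<nu>"
    and h_nonneg: "\<And>y. h y \<ge> 0"
    and T_meas: "T \<in> borel_measurable \<nu>"
    and Theta_full: "nat_param_space \<nu> h T = UNIV"
    and regular: "affinely_independent_stat \<nu> h T"
    and Psi_diff: "\<And>\<theta>. log_partition \<nu> h T differentiable (at \<theta>)"
    and grad_loc_lip: "locally_lipschitz (grad (log_partition \<nu> h T))"
    and Theta_c: "compact \<Theta>c"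
    and rho_bar: "\<rho>bar > 0"
  shows "\<exists>m M. 0 < m \<and> m < M \<and>
           (\<forall>v \<rho> \<theta>h. 0 \<le> \<rho> \<and> \<rho> \<le> \<rho>bar \<and> \<theta>h \<in> \<Theta>c \<longrightarrow>
              ereal (sqrt (2 * \<rho> / M) * norm v)
                \<le> worst_risk \<nu> h T \<theta>h \<rho> v - worst_risk \<nu> h T \<theta>h 0 v
            \<and> worst_risk \<nu> h T \<theta>h \<rho> v - worst_risk \<nu> h T \<theta>h 0 v
                \<le> ereal (sqrt (2 * \<rho> / m) * norm v))"
  proof -
  interpret ef2 \<nu> h T \<Theta>c
    by unfold_locales (fact assms)+
  show ?thesis using final[OF rho_bar] .
qed

end
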